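(* For every real $0<\epsilon<1$ and all integers $n\ge 2/\epsilon$ and $2\le k\le \epsilon n$, there exists a feasible irredundant (circular) heterogeneous PV graph $\vec G_R$ with $n$ sites and $k$ carriers such that $$\mathcal M(\vec G_R)\ >\ \tfrac14(1-\epsilon)^2\,n^2\,(k-2).$$ (This holds even though the agent knows $\vec G_R$, $n$ and $k$ and has unlimited memory.)
   Context: A PV (periodically varying) system consists of a finite set $S$ of $n$ sites and a set $C$ of $k\le n$ carriers. Each carrier $c$ has a route $\pi(c)=\langle x_0,\dots,x_{p(c)-1}\rangle$, a finite sequence of sites of length $p(c)\ge1$ called its period; $\pi(c)[j]=x_{j\bmod p(c)}$. At each time $t\in\mathbb N$ carrier $c$ is at $\pi(c)[t]$ and moves to $\pi(c)[t+1]$. The PV graph $\vec G_R$ is the directed edge-labelled multigraph on $S$ with edges $(x_i,x_{i+1},i)$, $0\le i<p(c)$, for every carrier. The system is homogeneous if all $p(c)$ are equal, heterogeneous otherwise. A route is simple if $\pi(c)[i]\ne\pi(c)[i+1]$ for all $i$ and, whenever $\pi(c)[i]=\pi(c)[j]$ with $0\le i<j<p(c)$, then $\pi(c)[i+1]\ne\pi(c)[j+1]$. A route is irredundant (circular) if it is simple and the directed multigraph it describes is either a simple cycle (the sites $x_0,\dots,x_{p(c)-1}$ are distinct) or a virtual cycle, i.e. the closed walk of a simple traversal of a tree (each tree edge traversed once in each direction); in particular $p(c)\le 2(n-1)$. A PV graph is irredundant if all its routes are irredundant. An exploring agent is injected at time $0$ at a site of $\mathrm{start}(\vec G_R)=\{\pi(c)[0]:c\in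 C\}$; if at time $t$ it is at site $x$ it must either ride one step with some carrier $c$ with $\pi(c)[t]=x$ (one move) or halt; it cannot wait. A strategy solves PVG-Exploration of $\vec G_R$ if from every injection site the agent visits all sites and halts in finite time. $\vec G_R$ is feasible if from the starting point of every carrier some realizable walk visits all sites. For feasible $\vec G_R$, $\mathcal M(\vec G_R)$ denotes the minimum, over all deterministic strategies solving PVG-Exploration of $\vec G_R$ (which may use full knowledge of $\vec G_R$ and unlimited memory), of the maximum over injection sites of the number of moves performed. *)

theory Defs
  imports Complex_Main
begin

text \<open>A PV graph with n sites and k carriers: sites are 0..<n, carriers are 0..<k,
  the route of carrier c is the list R ! c (its period is its length).\<close>

definition pv_graph :: "nat \<Rightarrow> nat \<Rightarrow> nat list list \<Rightarrow> bool" where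
  "pv_graph n k R \<longleftrightarrow> length R = k \<and>
     (\<forall>r\<in>set R. r \<noteq> [] \<and> set r \<subseteq> {0..<n})"

definition period :: "nat list list \<Rightarrow> nat \<Rightarrow> nat" where
  "period R c = length (R ! c)"

definition pos :: "nat list list \<Rightarrow> nat \<Rightarrow> nat \<Rightarrow> nat" where
  "pos R c t = (R ! c) ! (t mod length (R ! c))"

definition start_sites :: "nat list list \<Rightarrow> nat set" where
  "start_sites R = {pos R c 0 | c. c < length R}"

definition homogeneous :: "nat list list \<Rightarrow> bool" where
  "homogeneous R \<longleftrightarrow> (\<forall>c<length R. \<forall>d<length R. period R c = period R d)"

definition heterogeneous :: "nat list list \<Rightarrow> bool" where
  "heterogeneous R \<longleftrightarrow> \<not> homogeneous R"

text \<open>Route-level notions; r ! (i mod length r) is the cyclic indexing pi(c)[i].\<close>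

definition simple_route :: "nat list \<Rightarrow> bool" where
  "simple_route r \<longleftrightarrow> length r \<ge> 1 \<and>
     (\<forall>i<length r. r ! i \<noteq> r ! (Suc i mod length r)) \<and>
     (\<forall>i j. i < j \<and> j < length r \<and> r ! i = r ! j \<longrightarrow>
        r ! (Suc i mod length r) \<noteq> r ! (Suc j mod length r))"

definition is_tree :: "nat set \<Rightarrow> nat set set \<Rightarrow> bool" where
  "is_tree V T \<longleftrightarrow> finite V \<and> V \<noteq> {} \<and>
     (\<forall>e\<in>T. \<exists>a b. a \<in> V \<and> b \<in> V \<and> a \<noteq> b \<and> e = {a, b}) \<and>
     card T = card V - 1 \<and>
     (\<forall>a\<in>V. \<forall>b\<in>V. (a, b) \<in> {(x, y). {x, y} \<in> T}\<^sup>*)"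

definition simple_cycle_route :: "nat list \<Rightarrow> bool" where
  "simple_cycle_route r \<longleftrightarrow> distinct r"

definition virtual_cycle_route :: "nat list \<Rightarrow> bool" where
  "virtual_cycle_route r \<longleftrightarrow> (\<exists>T. is_tree (set r) T \<and>
     (\<forall>i<length r. {r ! i, r ! (Suc i mod length r)} \<in> T) \<and>
     (\<forall>a b. {a, b} \<in> T \<and> a \<noteq> b \<longrightarrow>
        card {i. i < length r \<and> r ! i = a \<and> r ! (Suc i mod length r) = b} = 1))"

definition irredundant_route :: "nat list \<Rightarrow> bool" where
  "irredundant_route r \<longleftrightarrow> simple_route r \<and>
     (simple_cycle_route r \<or> virtual_cycle_route r)"

definition irredundant :: "nat list list \<Rightarrow> bool" where
  "irredundant R \<longleftrightarrow> (\<forall>r\<in>set R. irredundant_route r)"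

text \<open>The agent is injected at site x at time 0 and performs the moves
  cs ! 0, cs ! 1, ... (cs ! i is the carrier ridden at time i), then halts.
  at R x cs i is its site after i moves (i.e. at time i).\<close>
definition at_site :: "nat list list \<Rightarrow> nat \<Rightarrow> nat list \<Rightarrow> nat \<Rightarrow> nat" where
  "at_site R x cs i = (if i = 0 then x else pos R (cs ! (i - 1)) i)"

definition realizable :: "nat list list \<Rightarrow> nat \<Rightarrow> nat list \<Rightarrow> bool" where
  "realizable R x cs \<longleftrightarrow>
     (\<forall>i<length cs. cs ! i < length R \<and> pos R (cs ! i) i = at_site R x cs i)"

definition visits_all :: "nat \<Rightarrow> nat list list \<Rightarrow> nat \<Rightarrow> nat list \<Rightarrow> bool" where
  "visits_all n R x cs \<longleftrightarrow> {0..<n} \<subseteq> {at_site R x cs i | i. i \<le> length cs}"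

definition feasible :: "nat \<Rightarrow> nat list list \<Rightarrow> bool" where
  "feasible n R \<longleftrightarrow>
     (\<forall>x\<in>start_sites R. \<exists>cs. realizable R x cs \<and> visits_all n R x cs)"

text \<open>A deterministic strategy with full knowledge of the graph and unlimited memory
  determines, for each injection site, the finite sequence of moves performed before
  halting (the agent receives no further input that is not determined by the graph
  and the injection site).\<close>
definition solves :: "nat \<Rightarrow> nat list list \<Rightarrow> (nat \<Rightarrow> nat list) \<Rightarrow> bool" where
  "solves n R \<sigma> \<longleftrightarrow>
     (\<forall>x\<in>start_sites R. realizable R x (\<sigma> x) \<and> visits_all n R x (\<sigma> x))"

definition min_moves :: "nat \<Rightarrow> nat list list \<Rightarrow> nat" where
  "min_moves n R = (LEAST m. \<exists>\<sigma>. solves n R \<sigma> \<and>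
     (\<forall>x\<in>start_sites R. length (\<sigma> x) \<le> m))"

end

theory Submission
  imports Defs
begin

lemma distinct_irr:
  assumes "distinct r" "length r \<ge> 2"
  shows "irredundant_route r"
proof -
  have "simple_route r"
    unfolding simple_route_def
  proof (intro conjI allI impI)
    show "1 \<le> length r" using assms by simp
  next
    fix i assume i: "i < length r"
    have "Suc i mod length r < length r" using i by (intro mod_less_divisor) linarith
    moreover have "Suc i mod length r \<noteq> i"
    proof (cases "Suc i < length r")
      case True then show ?thesis by simp
    next
      case False then have "Suc i = length r" using i by simp
      then show ?thesis using assms(2) by simp
    qed
    ultimately show "r ! i \<noteq> r ! (Suc i mod length r)"
      using assms(1) i nth_eq_iff_index_eq by metis
  next
    fix i j assume "i < j \<and> j < length r \<and> r ! i = r ! j"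
    then show "r ! (Suc i mod length r) \<noteq> r ! (Suc j mod length r)"
      using assms(1) nth_eq_iff_index_eq by (metis less_trans nat_neq_iff)
  qed
  then show ?thesis unfolding irredundant_route_def simple_cycle_route_def using assms by simp
qed

lemma solves_len:
  assumes "solves n R \<sigma>" "x \<in> start_sites R"
  shows "n \<le> length (\<sigma> x) + 1"
proof -
  have "{0..<n} \<subseteq> (\<lambda>i. at_site R x (\<sigma> x) i) ` {..length (\<sigma> x)}"
    using assms unfolding solves_def visits_all_def by auto
  then have "card {0..<n} \<le> card ((\<lambda>i. at_site R x (\<sigma> x) i) ` {..length (\<sigma> x)})"
    by (intro card_mono) auto
  also have "\<dots> \<le> card {..length (\<sigma> x)}" by (rule card_image_le) simp
  finally show ?thesis by simp
qed

lemma min_moves_ge: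
  assumes "feasible n R"
    and "\<And>\<sigma>. solves n R \<sigma> \<Longrightarrow> \<exists>x\<in>start_sites R. B \<le> length (\<sigma> x)"
  shows "B \<le> min_moves n R"
proof -
  define \<sigma> where "\<sigma> x = (SOME cs. realizable R x cs \<and> visits_all n R x cs)" for x
  have s: "solves n R \<sigma>" unfolding solves_def \<sigma>_def
    using assms(1) unfolding feasible_def by (metis (mono_tags, lifting) someI_ex)
  have fin: "finite (start_sites R)" unfolding start_sites_def by simp
  have ex: "\<exists>m \<sigma>. solves n R \<sigma> \<and> (\<forall>x\<in>start_sites R. length (\<sigma> x) \<le> m)"
    using s fin by (intro exI[of _ "Max ((\<lambda>x. length (\<sigma> x)) ` start_sites R)"] exI[of _ \<sigma>]) auto
  from LeastI_ex[OF ex] obtain \<tau> where t: "solves n R \<tau>"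
    "\<forall>x\<in>start_sites R. length (\<tau> x) \<le> min_moves n R"
    unfolding min_moves_def by blast
  from assms(2)[OF t(1)] t(2) show ?thesis by fastforce
qed

lemma lev_invariant:
  assumes real: "realizable R x cs"
    and MC: "\<And>c d t. c < length R \<Longrightarrow> d < length R \<Longrightarrow> pos R c t = pos R d t \<Longrightarrow>
        lev d \<le> Suc (lev c) \<and> (lev d = Suc (lev c) \<longrightarrow> L dvd (t + lev d))"
    and L: "L \<ge> 1"
    and z: "cs \<noteq> [] \<Longrightarrow> lev (cs ! 0) = 0"
  shows "i < length cs \<Longrightarrow> lev (cs ! i) * (L - 1) \<le> i"
proof (induction i)
  case 0 then show ?case using z by simp
next
  case (Suc i)
  have ih: "lev (cs ! i) * (L - 1) \<le> i" using Suc by simp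
  have c1: "cs ! i < length R" "cs ! Suc i < length R" using real Suc.prems
    unfolding realizable_def by auto
  have "pos R (cs ! Suc i) (Suc i) = at_site R x cs (Suc i)" using real Suc.prems
    unfolding realizable_def by auto
  also have "\<dots> = pos R (cs ! i) (Suc i)" unfolding at_site_def by simp
  finally have meet: "pos R (cs ! i) (Suc i) = pos R (cs ! Suc i) (Suc i)" by simp
  from MC[OF c1 meet] have m1: "lev (cs ! Suc i) \<le> Suc (lev (cs ! i))"
    and m2: "lev (cs ! Suc i) = Suc (lev (cs ! i)) \<longrightarrow> L dvd (Suc i + lev (cs ! Suc i))" by auto
  show ?case
  proof (cases "lev (cs ! Suc i) = Suc (lev (cs ! i))")
    case False
    then have "lev (cs ! Suc i) \<le> lev (cs ! i)" using m1 by simp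
    then have "lev (cs ! Suc i) * (L - 1) \<le> lev (cs ! i) * (L - 1)" by (rule mult_right_mono) simp
    then show ?thesis using ih by linarith
  next
    case True
    define j where "j = lev (cs ! i)"
    have d: "L dvd (Suc i + Suc j)" using m2 True j_def by simp
    then obtain a where a: "Suc i + Suc j = L * a" by (auto elim: dvdE)
    have ih': "j * (L - 1) \<le> i" using ih j_def by simp
    have "Suc j * (L - 1) \<le> Suc i"
    proof (rule ccontr)
      assume "\<not> ?thesis"
      then have lt: "Suc i < Suc j * (L - 1)" by simp
      have e1: "Suc j * (L - 1) + Suc j = L * Suc j" using L
        by (cases L) (auto simp: algebra_simps)
      have e2: "j * (L - 1) + Suc j = L * j + 1" using L
        by (cases L) (auto simp: algebra_simps)
      have "L * a < L * Suc j" using lt a e1 by linarith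
      then have "L * a < L * Suc j" by simp
      then have "a < Suc j" using mult_less_cancel1 by blast
      moreover have "L * j < L * a" using ih' a e2 by linarith
      then have "j < a" using mult_less_cancel1 by blast
      ultimately show False by simp
    qed
    then show ?thesis using True j_def by simp
  qed
qed

definition R0 :: "nat \<Rightarrow> nat \<Rightarrow> nat list list" where
  "R0 n k = [0..<n] # replicate (k - 1) [0, 1]"

lemma R0_facts:
  assumes n: "n \<ge> 3" and k: "k \<ge> 2"
  shows "pv_graph n k (R0 n k) \<and> feasible n (R0 n k) \<and> irredundant (R0 n k)
    \<and> heterogeneous (R0 n k) \<and> n - 1 \<le> min_moves n (R0 n k)"
proof -
  let ?R = "R0 n k"
  have len: "length ?R = k" using k unfolding R0_def by simp
  have nth0: "?R ! 0 = [0..<n]" unfolding R0_def by simp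
  have nthc: "c < k \<Longrightarrow> c \<noteq> 0 \<Longrightarrow> ?R ! c = [0, 1]" for c
    unfolding R0_def by (cases c) auto
  have pv: "pv_graph n k ?R" unfolding pv_graph_def R0_def using k n by auto
  have irr: "irredundant ?R" unfolding irredundant_def R0_def
    using n by (auto intro!: distinct_irr)
  have het: "heterogeneous ?R" unfolding heterogeneous_def homogeneous_def period_def
  proof
    assume "\<forall>c<length ?R. \<forall>d<length ?R. length (?R ! c) = length (?R ! d)"
    then have "length (?R ! 0) = length (?R ! 1)" using len k by simp
    then show False using nth0 nthc[of 1] k n by simp
  qed
  have pos0: "pos ?R 0 i = i" if "i < n" for i
    unfolding pos_def nth0 using that by simp
  have ss: "start_sites ?R = {0}"
  proof -
    have "pos ?R c 0 = 0" if "c < k" for c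
      using that nth0 nthc[OF that] n unfolding pos_def by (cases "c = 0") auto
    then show ?thesis unfolding start_sites_def using len k by force
  qed
  define cs where "cs = replicate (n - 1) (0::nat)"
  have at: "i \<le> n - 1 \<Longrightarrow> at_site ?R 0 cs i = i" for i
    unfolding at_site_def cs_def using pos0 n by auto
  have rl: "realizable ?R 0 cs" unfolding realizable_def cs_def
  proof (intro allI impI conjI)
    fix i assume i: "i < length (replicate (n - 1) (0::nat))"
    show "replicate (n - 1) 0 ! i < length ?R" using i len k by simp
    have "i \<le> n - 1" using i by simp
    then show "pos ?R (replicate (n - 1) 0 ! i) i = at_site ?R 0 (replicate (n - 1) 0) i"
      using at[unfolded cs_def] pos0 i by simp
  qed
  have va: "visits_all n ?R 0 cs" unfolding visits_all_def
  proof
    fix s assume "s \<in> {0..<n}"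
    then have "s = at_site ?R 0 cs s \<and> s \<le> length cs" using at cs_def by auto
    then show "s \<in> {at_site ?R 0 cs i |i. i \<le> length cs}" by blast
  qed
  have feas: "feasible n ?R" unfolding feasible_def ss using rl va by blast
  have mm: "n - 1 \<le> min_moves n ?R"
  proof (rule min_moves_ge[OF feas])
    fix \<sigma> assume "solves n ?R \<sigma>"
    from solves_len[OF this, of 0] show "\<exists>x\<in>start_sites ?R. n - 1 \<le> length (\<sigma> x)"
      using ss by auto
  qed
  show ?thesis using pv feas irr het mm by blast
qed

lemma mod_cancel_lt:
  fixes t j j' q :: nat
  assumes "(t + j) mod q = (t + j') mod q" "j < q" "j' < q"
  shows "j = j'"
proof -
  have "j mod q = j' mod q" using assms(1) by (simp add: nat_mod_eq_iff)
  then show ?thesis using assms by simp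
qed

lemma mod_last_dvd:
  fixes t q :: nat
  assumes "0 < q" "t mod q = q - 1"
  shows "q dvd Suc t"
  using assms by (metis One_nat_def Suc_eq_plus1 Suc_pred dvd_refl mod_Suc_eq mod_eq_0_iff_dvd)

lemma mod_hit:
  fixes a q y :: nat
  assumes "0 < q" "y < q"
  shows "\<exists>d<q. (a + d) mod q = y"
proof -
  define d where "d = (y + q - a mod q) mod q"
  have "(a + d) mod q = (a mod q + d) mod q" by (simp add: mod_add_left_eq)
  also have "\<dots> = (a mod q + (y + q - a mod q)) mod q" unfolding d_def by (simp add: mod_add_right_eq)
  also have "a mod q + (y + q - a mod q) = y + q" using mod_less_divisor[OF assms(1), of a] by linarith
  finally have "(a + d) mod q = y" using assms by simp
  moreover have "d < q" unfolding d_def using assms by simp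
  ultimately show ?thesis by blast
qed

locale chain =
  fixes p m k :: nat
  assumes m2: "2 \<le> m" and mp: "m \<le> p" and mk: "m \<le> k"
begin

definition per :: "nat \<Rightarrow> nat" where "per j = (if even j then p else Suc p)"

definition base :: "nat \<Rightarrow> nat \<Rightarrow> nat" where
  "base j x = (if x = 0 then (if j = 0 then 0 else j + 1)
     else if x = per j - 1 then (if j = m - 1 then 1 else j + 2)
     else if even j then m + x else m + p - 2 + x)"

definition route :: "nat \<Rightarrow> nat list" where
  "route j = map (\<lambda>i. base j ((i + j) mod per j)) [0..<per j]"

definition lv :: "nat \<Rightarrow> nat" where "lv c = (if c < m then c else 0)"

definition RR :: "nat list list" where "RR = map (\<lambda>c. route (lv c)) [0..<k]"

definition LL :: nat where "LL = p * Suc p"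

definition nn :: nat where "nn = 2 * p + m - 2"

definition P :: "nat \<Rightarrow> nat \<Rightarrow> nat" where "P j t = base j ((t + j) mod per j)"

lemma per_ge: "2 \<le> per j" "p \<le> per j" "per j \<le> Suc p" "0 < per j"
  using m2 mp unfolding per_def by auto

lemma LL_ge: "6 \<le> LL" "Suc p \<le> LL - 1"
proof -
  have "2 \<le> p" using m2 mp by simp
  then have "2 * 3 \<le> p * Suc p" by (intro mult_mono) auto
  then show "6 \<le> LL" unfolding LL_def by simp
  have "2 * Suc p \<le> p * Suc p" using \<open>2 \<le> p\<close> by (intro mult_right_mono) auto
  then show "Suc p \<le> LL - 1" unfolding LL_def by simp
qed

lemma len_RR: "length RR = k" unfolding RR_def by simp

lemma lv_lt: "lv c < m" unfolding lv_def using m2 by auto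

lemma RR_nth: "c < k \<Longrightarrow> RR ! c = route (lv c)" unfolding RR_def by simp

lemma pos_RR: "c < k \<Longrightarrow> pos RR c t = P (lv c) t"
proof -
  assume c: "c < k"
  let ?j = "lv c"
  have "pos RR c t = route ?j ! (t mod per ?j)" unfolding pos_def RR_nth[OF c]
    by (simp add: route_def)
  also have "\<dots> = base ?j ((t mod per ?j + ?j) mod per ?j)" unfolding route_def
    using per_ge(4)[of ?j] by simp
  also have "\<dots> = P ?j t" unfolding P_def by (simp add: mod_add_left_eq)
  finally show ?thesis .
qed

lemma per_even: "even j \<Longrightarrow> per j = p" and per_odd: "odd j \<Longrightarrow> per j = Suc p"
  unfolding per_def by auto

lemma base_cases:
  assumes "x < per j"
  shows "(x = 0 \<and> base j x = (if j = 0 then 0 else j + 1))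
    \<or> (x \<noteq> 0 \<and> x = per j - 1 \<and> base j x = (if j = m - 1 then 1 else j + 2))
    \<or> (0 < x \<and> x < per j - 1 \<and> even j \<and> base j x = m + x)
    \<or> (0 < x \<and> x < per j - 1 \<and> odd j \<and> base j x = m + p - 2 + x)"
proof -
  consider "x = 0" | "x \<noteq> 0" "x = per j - 1" | "x \<noteq> 0" "x \<noteq> per j - 1" "even j"
    | "x \<noteq> 0" "x \<noteq> per j - 1" "odd j" by blast
  then show ?thesis
  proof cases
    case 1 then show ?thesis unfolding base_def by simp
  next
    case 2 then show ?thesis unfolding base_def by simp
  next
    case 3 then have "base j x = m + x" unfolding base_def by simp
    then show ?thesis using 3 assms by auto
  next
    case 4 then have "base j x = m + p - 2 + x" unfolding base_def by simp
    then show ?thesis using 4 assms by auto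
  qed
qed

lemma base_lt: assumes "j < m" "x < per j" shows "base j x < nn"
proof -
  have p2: "2 \<le> p" using m2 mp by simp
  have pe: "per j \<le> Suc p" by (rule per_ge)
  have pp: "even j \<Longrightarrow> per j = p" by (rule per_even)
  have nn: "nn + 2 = 2 * p + m" unfolding nn_def using p2 by simp
  from base_cases[OF assms(2)] show ?thesis
  proof (elim disjE conjE)
    assume "x = 0" "base j x = (if j = 0 then 0 else j + 1)"
    then show ?thesis using assms(1) nn p2 by (cases "j = 0") auto
  next
    assume "x \<noteq> 0" "x = per j - 1" "base j x = (if j = m - 1 then 1 else j + 2)"
    then show ?thesis using assms(1) nn p2 by (cases "j = m - 1") auto
  next
    assume "0 < x" "x < per j - 1" "even j" "base j x = m + x"
    then show ?thesis using nn pp by simp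
  next
    assume "0 < x" "x < per j - 1" "odd j" "base j x = m + p - 2 + x"
    then show ?thesis using nn pe p2 by simp
  qed
qed

lemma base_inj: assumes "j < m" "x < per j" "y < per j" "base j x = base j y" shows "x = y"
proof (rule ccontr)
  assume ne: "x \<noteq> y"
  have p2: "2 \<le> p" using m2 mp by simp
  have pe: "per j \<le> Suc p" "2 \<le> per j" by (rule per_ge)+
  have pp: "even j \<Longrightarrow> per j = p" by (rule per_even)
  have A: "base j z \<le> m" if "z = 0 \<or> z = per j - 1" "j \<noteq> m - 1 \<or> z = 0" for z
    using that assms(1) unfolding base_def by auto
  have Bx: "m < base j z" if "0 < z" "z < per j - 1" for z
    using that p2 unfolding base_def by auto
  have Ce: "base j z = m + z" if "0 < z" "z < per j - 1" "even j" for z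
    using that unfolding base_def by auto
  have Co: "base j z = m + p - 2 + z" if "0 < z" "z < per j - 1" "odd j" for z
    using that unfolding base_def by auto
  have io: "base j 0 \<noteq> base j (per j - 1)"
    using pe assms(1) m2 unfolding base_def by auto
  show False
  proof (cases "(0 < x \<and> x < per j - 1) \<and> (0 < y \<and> y < per j - 1)")
    case True
    then show ?thesis using Ce Co assms(4) ne p2 by (cases "even j") auto
  next
    case False
    then consider "x = 0 \<or> x = per j - 1" | "y = 0 \<or> y = per j - 1" using assms(2,3) by linarith
    then show ?thesis
    proof cases
      case 1
      show ?thesis
      proof (cases "y = 0 \<or> y = per j - 1")
        case True then show ?thesis using 1 ne io assms(4) by auto
      next
        case F: False
        have "0 < y" "y < per j - 1" using F assms(3) by auto
        then have "m < base j y" by (rule Bx)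
        moreover have "base j x \<le> m \<or> base j x = 1" using A[of x] 1 unfolding base_def by (cases "j = m - 1") auto
        ultimately show ?thesis using assms(4) m2 by auto
      qed
    next
      case 2
      show ?thesis
      proof (cases "x = 0 \<or> x = per j - 1")
        case True then show ?thesis using 2 ne io assms(4) by auto
      next
        case F: False
        have "0 < x" "x < per j - 1" using F assms(2) by auto
        then have "m < base j x" by (rule Bx)
        moreover have "base j y \<le> m \<or> base j y = 1" using A[of y] 2 unfolding base_def by (cases "j = m - 1") auto
        ultimately show ?thesis using assms(4) m2 by auto
      qed
    qed
  qed
qed

lemma base_0: assumes "j < m" "x < per j" "base j x = 0" shows "j = 0"
  using base_cases[OF assms(2)] assms m2 by (auto split: if_splits)

lemma base_1: assumes "j < m" "x < per j" "base j x = 1" shows "j = m - 1"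
  using base_cases[OF assms(2)] assms m2 by (auto split: if_splits)

lemma P_key:
  assumes j: "j < m" and j': "j' < m" and eq: "P j t = P j' t" and ne: "j \<noteq> j'"
  shows "((t + j) mod per j = per j - 1 \<and> (t + j') mod per j' = 0 \<and> j' = Suc j)
       \<or> ((t + j) mod per j = 0 \<and> (t + j') mod per j' = per j' - 1 \<and> j = Suc j')"
proof -
  define x where "x = (t + j) mod per j"
  define y where "y = (t + j') mod per j'"
  have x: "x < per j" unfolding x_def using per_ge(4) by simp
  have y: "y < per j'" unfolding y_def using per_ge(4) by simp
  have e: "base j x = base j' y" using eq unfolding P_def x_def y_def .
  have p2: "2 \<le> p" using m2 mp by simp
  have pe: "per j \<le> Suc p" "per j' \<le> Suc p" "2 \<le> per j" "2 \<le> per j'" by (rule per_ge)+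
  have ppx: "even j \<Longrightarrow> per j = p" "even j' \<Longrightarrow> per j' = p" by (simp_all add: per_even)
  have ppo: "odd j \<Longrightarrow> per j = Suc p" "odd j' \<Longrightarrow> per j' = Suc p" by (simp_all add: per_odd)
  have ce: "j = j'" if "even j" "even j'" "x = y"
  proof -
    have "(t + j) mod p = (t + j') mod p" using that ppx unfolding x_def y_def by simp
    then show ?thesis by (rule mod_cancel_lt) (use j j' mp in linarith)+
  qed
  have co: "j = j'" if "odd j" "odd j'" "x = y"
  proof -
    have "(t + j) mod Suc p = (t + j') mod Suc p" using that ppo unfolding x_def y_def by simp
    then show ?thesis by (rule mod_cancel_lt) (use j j' mp in linarith)+
  qed
  from base_cases[OF x] base_cases[OF y] have "(x = per j - 1 \<and> y = 0 \<and> j' = Suc j) \<or> (x = 0 \<and> y = per j' - 1 \<and> j = Suc j')"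
  proof (elim disjE conjE)
  qed (use e ne ce co j j' p2 pe ppx ppo in \<open>auto split: if_splits\<close>)
  then show ?thesis unfolding x_def y_def .
qed

lemma P_MC:
  assumes j: "j < m" and j': "j' < m" and eq: "P j t = P j' t"
  shows "j' \<le> Suc j \<and> (j' = Suc j \<longrightarrow> LL dvd (t + j'))"
proof (cases "j = j'")
  case True then show ?thesis by simp
next
  case False
  from P_key[OF j j' eq False] show ?thesis
  proof (elim disjE conjE)
    assume a: "(t + j) mod per j = per j - 1" "(t + j') mod per j' = 0" "j' = Suc j"
    have d1: "per j dvd Suc (t + j)" by (rule mod_last_dvd[OF per_ge(4) a(1)])
    have d2: "per j' dvd (t + j')" using a(2) by (simp add: mod_eq_0_iff_dvd)
    have "LL dvd (t + j')"
    proof (cases "even j")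
      case True
      then have "per j = p" "per j' = Suc p" using a(3) by (simp_all add: per_def)
      then show ?thesis using d1 d2 a(3) unfolding LL_def by (intro divides_mult) auto
    next
      case False
      then have "per j = Suc p" "per j' = p" using a(3) by (simp_all add: per_def)
      then have "Suc p * p dvd t + j'" using d1 d2 a(3) by (intro divides_mult) auto
      then show ?thesis unfolding LL_def by (simp add: mult.commute)
    qed
    then show ?thesis using a by simp
  next
    assume "(t + j) mod per j = 0" "(t + j') mod per j' = per j' - 1" "j = Suc j'"
    then show ?thesis by simp
  qed
qed

lemma mod_pred_last:
  fixes a q :: nat
  assumes "0 < q" "q dvd Suc a"
  shows "a mod q = q - 1"
proof -
  have "Suc a mod q = 0" using assms(2) by simp
  then have "Suc (a mod q) = q" unfolding mod_Suc by (auto split: if_splits)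
  then show ?thesis by simp
qed

lemma per_dvd_LL: "per j dvd LL"
proof (cases "even j")
  case True then show ?thesis unfolding per_def LL_def by simp
next
  case False then have "per j = Suc p" unfolding per_def by simp
  then show ?thesis unfolding LL_def by (metis dvd_triv_right)
qed

lemma P_meet:
  assumes i: "Suc i < m" and d: "LL dvd (t + Suc i)"
  shows "P i t = P (Suc i) t"
proof -
  have d1: "per i dvd Suc (t + i)" using dvd_trans[OF per_dvd_LL d] by simp
  have d2: "per (Suc i) dvd (t + Suc i)" using dvd_trans[OF per_dvd_LL d] .
  have x: "(t + i) mod per i = per i - 1" by (rule mod_pred_last[OF per_ge(4) d1])
  have y: "(t + Suc i) mod per (Suc i) = 0" using d2 by simp
  have "P i t = i + 2" unfolding P_def x base_def using per_ge(1)[of i] i by auto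
  moreover have "P (Suc i) t = i + 2" unfolding P_def y base_def by simp
  ultimately show ?thesis by simp
qed

lemma base_surj:
  assumes "s < nn"
  shows "\<exists>j<m. \<exists>x<per j. base j x = s"
proof -
  have p2: "2 \<le> p" using m2 mp by simp
  have nn: "nn + 2 = 2 * p + m" unfolding nn_def using p2 by simp
  have W: "\<exists>j<m. \<exists>x<per j. base j x = s" if "j < m" "x < per j" "base j x = s" for j x
    using that by blast
  consider "s = 0" | "s = 1" | "2 \<le> s" "s \<le> m" | "m < s" "s \<le> m + p - 2" | "m + p - 2 < s"
    by linarith
  then show ?thesis
  proof cases
    case 1
    have "base 0 0 = 0" unfolding base_def by simp
    then show ?thesis using 1 m2 per_ge(4)[of 0] by (intro W[of 0 0]) auto
  next
    case 2
    have pg: "2 \<le> per (m - 1)" by (rule per_ge)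
    have "base (m - 1) (per (m - 1) - 1) = 1" unfolding base_def using pg by simp
    then show ?thesis using 2 m2 pg by (intro W[of "m - 1" "per (m - 1) - 1"]) auto
  next
    case 3
    have pg: "2 \<le> per (s - 2)" by (rule per_ge)
    have "s - 2 \<noteq> m - 1" using 3 by linarith
    then have "base (s - 2) (per (s - 2) - 1) = s" unfolding base_def using pg 3 by simp
    then show ?thesis using 3 m2 pg by (intro W[of "s - 2" "per (s - 2) - 1"]) auto
  next
    case 4
    have pe: "per 0 = p" by (simp add: per_def)
    have "s - m \<noteq> 0" "s - m \<noteq> p - 1" using 4 p2 by linarith+
    then have "base 0 (s - m) = s" unfolding base_def pe using 4 by simp
    moreover have "s - m < per 0" using 4 pe p2 by linarith
    ultimately show ?thesis using m2 by (intro W[of 0 "s - m"]) auto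
  next
    case 5
    have pe: "per 1 = Suc p" by (simp add: per_def)
    have lt: "s < 2 * p + m - 2" using assms nn_def by simp
    have "s + 2 - m - p \<noteq> 0" "s + 2 - m - p \<noteq> p" using 5 lt p2 by linarith+
    then have "base 1 (s + 2 - m - p) = s" unfolding base_def pe using 5 p2 by simp
    moreover have "s + 2 - m - p < per 1" using 5 pe p2 lt by linarith
    ultimately show ?thesis using m2 by (intro W[of 1 "s + 2 - m - p"]) auto
  qed
qed

lemma route_distinct: "j < m \<Longrightarrow> distinct (route j)"
  unfolding route_def
proof (subst distinct_map, intro conjI)
  assume j: "j < m"
  show "distinct [0..<per j]" by simp
  show "inj_on (\<lambda>i. base j ((i + j) mod per j)) (set [0..<per j])"
  proof (rule inj_onI)
    fix a b assume a: "a \<in> set [0..<per j]" and b: "b \<in> set [0..<per j]"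
      and e: "base j ((a + j) mod per j) = base j ((b + j) mod per j)"
    have "(a + j) mod per j = (b + j) mod per j"
      by (rule base_inj[OF j _ _ e]) (use per_ge(4) in simp)+
    then have "(j + a) mod per j = (j + b) mod per j" by (simp add: add.commute)
    then show "a = b" by (rule mod_cancel_lt) (use a b in auto)
  qed
qed

lemma RR_props: "pv_graph nn k RR \<and> irredundant RR \<and> heterogeneous RR"
proof (intro conjI)
  show "pv_graph nn k RR" unfolding pv_graph_def
  proof (intro conjI ballI)
    show "length RR = k" by (rule len_RR)
  next
    fix r assume "r \<in> set RR"
    then obtain c where r: "r = route (lv c)" unfolding RR_def by auto
    show "r \<noteq> []" unfolding r route_def using per_ge(4) by simp
    show "set r \<subseteq> {0..<nn}" unfolding r route_def using base_lt[OF lv_lt] per_ge(4) by auto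
  qed
  show "irredundant RR" unfolding irredundant_def
  proof
    fix r assume "r \<in> set RR"
    then obtain c where r: "r = route (lv c)" unfolding RR_def by auto
    show "irredundant_route r" unfolding r
      by (rule distinct_irr[OF route_distinct[OF lv_lt]]) (simp add: route_def per_ge(1))
  qed
  show "heterogeneous RR" unfolding heterogeneous_def homogeneous_def period_def
  proof
    assume "\<forall>c<length RR. \<forall>d<length RR. length (RR ! c) = length (RR ! d)"
    then have "length (RR ! 0) = length (RR ! 1)" using len_RR m2 mk by simp
    moreover have "lv 0 = 0" "lv 1 = 1" unfolding lv_def using m2 by auto
    ultimately show False using RR_nth[of 0] RR_nth[of 1] m2 mk
      by (simp add: route_def per_def)
  qed
qed

end

context chain begin

definition ell :: "nat \<Rightarrow> nat \<Rightarrow> nat" where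
  "ell j t = (if t < LL then min j (LL - 1 - t) else min (m - 1) ((t - 1) div (LL - 1) - 1))"

lemma ell_lt: "j < m \<Longrightarrow> ell j t < m"
  unfolding ell_def using m2 by auto

lemma ell_0: "j < m \<Longrightarrow> ell j 0 = j"
  unfolding ell_def using LL_ge mp by auto

lemma ell_win:
  assumes i: "i < m" and t1: "Suc ((i + 1) * (LL - 1)) \<le> t" and t2: "t \<le> (i + 2) * (LL - 1)"
  shows "ell j t = i"
proof -
  define D where "D = LL - 1"
  have D: "LL = Suc D" "D \<ge> 5" unfolding D_def using LL_ge by auto
  have "D \<le> (i + 1) * D" by simp
  then have nl: "\<not> t < LL" using t1 D unfolding D_def[symmetric] by linarith
  have "(t - 1) div D = i + 1"
    by (rule div_nat_eqI) (use t1 t2 D_def in \<open>auto simp: algebra_simps\<close>)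
  then show ?thesis unfolding ell_def D_def[symmetric] using nl i by simp
qed

lemma ell_step:
  assumes j: "j < m" and t: "0 < t"
  shows "P (ell j t) t = P (ell j (t - 1)) t"
proof -
  define D where "D = LL - 1"
  have D: "LL = Suc D" "D \<ge> 5" unfolding D_def using LL_ge by auto
  consider "t < LL" | "t = LL" | "LL < t" by linarith
  then show ?thesis
  proof cases
    case 1
    have e1: "ell j t = min j (D - t)" unfolding ell_def D_def using 1 by simp
    have e2: "ell j (t - 1) = min j (D - (t - 1))" unfolding ell_def D_def using 1 by simp
    show ?thesis
    proof (cases "D - (t - 1) \<le> j")
      case True
      define i where "i = D - t"
      have si: "D - (t - 1) = Suc i" unfolding i_def using 1 t D by simp
      have "ell j t = i" "ell j (t - 1) = Suc i" using e1 e2 True si unfolding i_def by auto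
      moreover have "P i t = P (Suc i) t"
        by (rule P_meet) (use True si j 1 D t in \<open>auto simp: i_def\<close>)
      ultimately show ?thesis by simp
    next
      case False
      then have "ell j t = j" "ell j (t - 1) = j" using e1 e2 by auto
      then show ?thesis by simp
    qed
  next
    case 2
    have "ell j (t - 1) = 0" unfolding ell_def using 2 D by simp
    moreover have "ell j t = 0" unfolding ell_def using 2 D by simp
    ultimately show ?thesis by simp
  next
    case 3
    define a where "a = (t - 1) div D"
    define r where "r = (t - 1) mod D"
    have tr: "t - 1 = a * D + r" unfolding a_def r_def by simp
    have rD: "r < D" unfolding r_def using D by simp
    have e1: "ell j t = min (m - 1) (a - 1)" unfolding ell_def a_def D_def using 3 by simp
    have n1: "\<not> t - 1 < LL" using 3 by linarith
    have t2: "t - 1 - 1 = t - 2" by simp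
    have e2: "ell j (t - 1) = min (m - 1) ((t - 2) div D - 1)" unfolding ell_def D_def[symmetric]
      using n1 t2 by (simp only: if_False) 
    show ?thesis
    proof (cases "r = 0")
      case False
      have "(t - 2) div D = a"
        by (rule div_nat_eqI) (use tr rD False in \<open>auto simp: algebra_simps\<close>)
      then show ?thesis using e1 e2 by simp
    next
      case True
      have a2: "a \<ge> 2"
      proof (rule ccontr)
        assume "\<not> a \<ge> 2"
        then have "a \<le> 1" by simp
        then have "a * D \<le> D" by simp
        then show False using tr True 3 D by linarith
      qed
      have "D * 1 \<le> D * a" using a2 by (intro mult_le_mono2) simp
      then have "(t - 2) div D = a - 1"
        by (intro div_nat_eqI) (use tr True a2 D 3 in \<open>auto simp: algebra_simps\<close>)
      then have e2': "ell j (t - 1) = min (m - 1) (a - 2)" using e2 by (simp add: numeral_2_eq_2)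
      show ?thesis
      proof (cases "a - 1 \<le> m - 1")
        case True
        define i where "i = a - 2"
        have "ell j t = Suc i" "ell j (t - 1) = i" using e1 e2' True a2 unfolding i_def by auto
        moreover have "P i t = P (Suc i) t"
        proof (rule P_meet)
          show "Suc i < m" using True a2 m2 unfolding i_def by linarith
          have "t + Suc i = a * LL" using tr \<open>r = 0\<close> a2 D t unfolding i_def
            by (cases a) (auto simp: algebra_simps)
          then show "LL dvd t + Suc i" by simp
        qed
        ultimately show ?thesis by simp
      next
        case False
        then have "ell j t = m - 1" "ell j (t - 1) = m - 1" using e1 e2' by auto
        then show ?thesis by simp
      qed
    qed
  qed
qed

definition WW :: nat where "WW = Suc ((m + 1) * (LL - 1))"

definition walk :: "nat \<Rightarrow> nat list" where "walk j = map (ell j) [0..<WW]"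

lemma lv_id: "c < m \<Longrightarrow> lv c = c" unfolding lv_def by simp

lemma pos_P: "c < m \<Longrightarrow> pos RR c t = P c t"
  using pos_RR[of c t] lv_id[of c] mk by simp

lemma walk_at:
  assumes j: "j < m" and t: "0 < t" "t \<le> WW"
  shows "at_site RR x (walk j) t = P (ell j (t - 1)) t"
proof -
  have "walk j ! (t - 1) = ell j (t - 1)" unfolding walk_def using t by simp
  then show ?thesis unfolding at_site_def using t pos_P[OF ell_lt[OF j]] by simp
qed

lemma walk_real:
  assumes j: "j < m"
  shows "realizable RR (P j 0) (walk j)"
  unfolding realizable_def
proof (intro allI impI conjI)
  fix t assume t: "t < length (walk j)"
  then have tW: "t < WW" unfolding walk_def by simp
  have wt: "walk j ! t = ell j t" unfolding walk_def using tW by simp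
  show "walk j ! t < length RR" unfolding wt len_RR using ell_lt[OF j] mk by (meson order_less_le_trans)
  show "pos RR (walk j ! t) t = at_site RR (P j 0) (walk j) t"
  proof (cases "t = 0")
    case True
    then show ?thesis unfolding wt at_site_def using pos_P[OF j] ell_0[OF j] by simp
  next
    case False
    then have "at_site RR (P j 0) (walk j) t = P (ell j (t - 1)) t"
      using walk_at[OF j] tW by simp
    also have "\<dots> = P (ell j t) t" using ell_step[OF j] False by simp
    finally show ?thesis unfolding wt using pos_P[OF ell_lt[OF j]] by simp
  qed
qed

lemma walk_visits:
  assumes j: "j < m"
  shows "visits_all nn RR (P j 0) (walk j)"
  unfolding visits_all_def
proof
  fix s assume "s \<in> {0..<nn}"
  then obtain i y where i: "i < m" and y: "y < per i" and b: "base i y = s"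
    using base_surj[of s] by auto
  define a where "a = Suc ((i + 1) * (LL - 1))"
  from mod_hit[OF per_ge(4) y, of "Suc (a + i)"] obtain d where
    d: "d < per i" "(Suc (a + i) + d) mod per i = y" by blast
  define t where "t = a + d"
  have pl: "per i \<le> LL - 1" using per_ge(3)[of i] LL_ge(2) by linarith
  have t1: "Suc ((i + 1) * (LL - 1)) \<le> t" unfolding t_def a_def by simp
  have e22: "(i + 2) * (LL - 1) = (i + 1) * (LL - 1) + (LL - 1)"
    using add_mult_distrib[of "i + 1" 1 "LL - 1"] by simp
  have t2: "t \<le> (i + 2) * (LL - 1)" unfolding t_def a_def e22 using d(1) pl by linarith
  have "i + 2 \<le> m + 1" using i by simp
  then have "(i + 2) * (LL - 1) \<le> (m + 1) * (LL - 1)" by (rule mult_right_mono) simp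
  then have tW: "Suc t \<le> WW" unfolding WW_def using t2 by simp
  have "at_site RR (P j 0) (walk j) (Suc t) = P (ell j (Suc t - 1)) (Suc t)"
    by (rule walk_at[OF j _ tW]) simp
  also have "\<dots> = P i (Suc t)" using ell_win[OF i t1 t2] by simp
  also have "\<dots> = base i ((Suc t + i) mod per i)" unfolding P_def ..
  also have "Suc t + i = Suc (a + i) + d" unfolding t_def by simp
  finally have "at_site RR (P j 0) (walk j) (Suc t) = s" using d(2) b by simp
  moreover have "Suc t \<le> length (walk j)" unfolding walk_def using tW by simp
  ultimately show "s \<in> {at_site RR (P j 0) (walk j) i |i. i \<le> length (walk j)}" by blast
qed

lemma RR_feasible: "feasible nn RR"
  unfolding feasible_def
proof
  fix x assume "x \<in> start_sites RR"
  then obtain c where c: "c < k" and x: "x = pos RR c 0" unfolding start_sites_def len_RR by auto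
  have xe: "x = P (lv c) 0" using x pos_RR[OF c] by simp
  show "\<exists>cs. realizable RR x cs \<and> visits_all nn RR x cs"
    unfolding xe using walk_real[OF lv_lt] walk_visits[OF lv_lt] by blast
qed

lemma RR_lower: "(m - 1) * (LL - 1) + 1 \<le> min_moves nn RR"
proof (rule min_moves_ge[OF RR_feasible])
  fix \<sigma> assume sol: "solves nn RR \<sigma>"
  have p00: "P 0 0 = 0" unfolding P_def base_def by simp
  have x0: "pos RR 0 0 = 0" using pos_P[of 0 0] m2 p00 by simp
  have k0: "0 < k" using m2 mk by simp
  have xs: "0 \<in> start_sites RR" unfolding start_sites_def len_RR
    using x0 k0 by force
  define cs where "cs = \<sigma> 0"
  have rl: "realizable RR 0 cs" and va: "visits_all nn RR 0 cs"
    using sol xs unfolding solves_def cs_def by blast+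
  have MC: "lv d \<le> Suc (lv c) \<and> (lv d = Suc (lv c) \<longrightarrow> LL dvd (t + lv d))"
    if "c < length RR" "d < length RR" "pos RR c t = pos RR d t" for c d t
  proof -
    have "c < k" "d < k" using that(1,2) len_RR by simp_all
    then have "P (lv c) t = P (lv d) t" using that(3) pos_RR by simp
    then show ?thesis by (rule P_MC[OF lv_lt lv_lt])
  qed
  have one: "1 < nn" unfolding nn_def using m2 mp by simp
  then have "1 \<in> {0..<nn}" by simp
  then have "1 \<in> {at_site RR 0 cs i |i. i \<le> length cs}" using va unfolding visits_all_def by blast
  then obtain t where t: "t \<le> length cs" "at_site RR 0 cs t = 1" by force
  have t0: "t \<noteq> 0"
  proof
    assume "t = 0" then have "at_site RR 0 cs t = 0" unfolding at_site_def by simp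
    then show False using t(2) by simp
  qed
  then have ne: "cs \<noteq> []" using t(1) by auto
  have z: "lv (cs ! 0) = 0"
  proof -
    have "0 < length cs" using ne by simp
    then have r0: "cs ! 0 < length RR \<and> pos RR (cs ! 0) 0 = at_site RR 0 cs 0"
      using rl unfolding realizable_def by blast
    then have c0: "cs ! 0 < k" using len_RR by simp
    have "pos RR (cs ! 0) 0 = 0" using r0 unfolding at_site_def by simp
    then have b0: "base (lv (cs ! 0)) ((0 + lv (cs ! 0)) mod per (lv (cs ! 0))) = 0"
      using pos_RR[OF c0] unfolding P_def by simp
    show ?thesis by (rule base_0[OF lv_lt _ b0]) (simp add: per_ge(4))
  qed
  have L1: "1 \<le> LL" using LL_ge by simp
  have tl: "t - 1 < length cs" using t(1) t0 by simp
  have inv: "lv (cs ! (t - 1)) * (LL - 1) \<le> t - 1"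
  proof (rule lev_invariant[where lev = lv and L = LL and R = RR and x = 0 and cs = cs])
    show "realizable RR 0 cs" by (rule rl)
    show "\<And>c d t. c < length RR \<Longrightarrow> d < length RR \<Longrightarrow> pos RR c t = pos RR d t \<Longrightarrow>
        lv d \<le> Suc (lv c) \<and> (lv d = Suc (lv c) \<longrightarrow> LL dvd (t + lv d))" by (rule MC)
    show "1 \<le> LL" by (rule L1)
    show "lv (cs ! 0) = 0" by (rule z)
    show "t - 1 < length cs" by (rule tl)
  qed
  have "cs ! (t - 1) < length RR" using rl tl unfolding realizable_def by blast
  then have ct: "cs ! (t - 1) < k" using len_RR by simp
  have "pos RR (cs ! (t - 1)) t = 1" using t t0 unfolding at_site_def by simp
  then have b1: "base (lv (cs ! (t - 1))) ((t + lv (cs ! (t - 1))) mod per (lv (cs ! (t - 1)))) = 1"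
    using pos_RR[OF ct] unfolding P_def by simp
  have "lv (cs ! (t - 1)) = m - 1" by (rule base_1[OF lv_lt _ b1]) (simp add: per_ge(4))
  then have "(m - 1) * (LL - 1) \<le> t - 1" using inv by simp
  then have "(m - 1) * (LL - 1) + 1 \<le> t" using t0 by linarith
  then have "(m - 1) * (LL - 1) + 1 \<le> length (\<sigma> 0)" using t(1) unfolding cs_def by linarith
  then show "\<exists>x\<in>start_sites RR. (m - 1) * (LL - 1) + 1 \<le> length (\<sigma> x)"
    using xs by blast
qed

end

lemma amgm3:
  fixes a c :: real
  assumes "0 \<le> a" "0 \<le> c"
  shows "27 * (a^2 * c) \<le> (2 * a + c)^3"
proof -
  have "(2 * a + c)^3 - 27 * (a^2 * c) = (a - c)^2 * (8 * a + c)"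
    by (simp add: power2_eq_square power3_eq_cube algebra_simps)
  moreover have "0 \<le> (a - c)^2 * (8 * a + c)" using assms by simp
  ultimately show ?thesis by linarith
qed

lemma Tn_le:
  fixes n k :: real
  assumes "2 \<le> k" "k \<le> n"
  shows "(n - k)^2 * (k - 2) / 4 \<le> (n - 2)^3 / 27"
proof -
  have h0: "27 * (((n - k) / 2)^2 * (k - 2)) \<le> (2 * ((n - k) / 2) + (k - 2))^3"
    by (rule amgm3) (use assms in auto)
  have e: "2 * ((n - k) / 2) + (k - 2) = n - 2" by (simp add: field_simps)
  have sq: "((n - k) / 2)^2 = (n - k)^2 / 4" by (simp add: power_divide)
  have h: "27 * ((n - k)^2 / 4 * (k - 2)) \<le> (n - 2)^3" using h0 unfolding e sq .
  then show ?thesis by (simp add: field_simps)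
qed

lemma small_n:
  fixes n :: real
  assumes "3 \<le> n" "n \<le> 7"
  shows "(n - 2)^3 / 27 < n - 1"
proof -
  define u where "u = n - 2"
  have u: "1 \<le> u" "u \<le> 5" using assms unfolding u_def by auto
  have "u^2 \<le> 5^2" using u by (intro power_mono) auto
  then have "u * u^2 \<le> u * 25" using u by (intro mult_left_mono) auto
  then have "u^3 \<le> 25 * u" by (simp add: power3_eq_cube power2_eq_square algebra_simps)
  then have "u^3 < 27 * u + 27" using u by linarith
  then show ?thesis unfolding u_def by simp
qed

lemma big_case1:
  fixes A K M' P :: real
  assumes "1 \<le> K" "K \<le> M'" "0 \<le> A" "A + 2 \<le> 2 * P"
  shows "K * A^2 / 4 < M' * (P * (P + 1) - 1) + 1"
proof -
  define X where "X = P * (P + 1)"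
  have "(A + 2) * (A + 4) \<le> (2 * P) * (2 * P + 2)"
    using assms by (intro mult_mono) auto
  moreover have "(2 * P) * (2 * P + 2) = 4 * X" unfolding X_def by (simp add: algebra_simps)
  moreover have "(A + 2) * (A + 4) = A^2 + 6 * A + 8" by (simp add: power2_eq_square algebra_simps)
  ultimately have "A^2 + 6 * A + 8 \<le> 4 * X" by simp
  then have "A^2 \<le> 4 * X - 4" using assms(3) by linarith
  then have h: "A^2 \<le> 4 * (X - 1)" by (simp add: algebra_simps)
  then have "K * A^2 \<le> K * (4 * (X - 1))" using assms by (intro mult_left_mono) auto
  also have "\<dots> \<le> M' * (4 * (X - 1))"
  proof (rule mult_right_mono)
    show "K \<le> M'" by (rule assms(2))
    show "0 \<le> 4 * (X - 1)" using h zero_le_power2[of A] by linarith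
  qed
  finally have "K * A^2 \<le> 4 * (M' * (X - 1))" by (simp add: algebra_simps)
  then have "K * A^2 / 4 \<le> M' * (X - 1)" by simp
  then show ?thesis unfolding X_def[symmetric] by linarith
qed

lemma big_case2:
  fixes n M' P :: real
  assumes "8 \<le> n" "n / 3 - 2 \<le> M'" "(n + 2) / 3 \<le> P"
  shows "(n - 2)^3 / 27 < M' * (P * (P + 1) - 1) + 1"
proof -
  define Q where "Q = (n + 2) / 3"
  have Q1: "1 \<le> Q" unfolding Q_def using assms(1) by simp
  have "1 * 1 \<le> Q * (Q + 1)" using Q1 by (intro mult_mono) auto
  then have Q0: "0 \<le> Q * (Q + 1) - 1" by simp
  have PQ: "Q \<le> P" using assms(3) unfolding Q_def .
  have "Q * (Q + 1) \<le> P * (P + 1)" using PQ Q1 by (intro mult_mono) auto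
  then have h1: "Q * (Q + 1) - 1 \<le> P * (P + 1) - 1" by simp
  have "(n / 3 - 2) * (Q * (Q + 1) - 1) \<le> M' * (P * (P + 1) - 1)"
    using assms h1 Q0 by (intro mult_mono) auto
  moreover have "27 * ((n / 3 - 2) * (Q * (Q + 1) - 1)) = (n - 6) * (n^2 + 7 * n + 1)"
    unfolding Q_def by (simp add: power2_eq_square algebra_simps divide_simps)
  moreover have "(n - 6) * (n^2 + 7 * n + 1) - (n - 2)^3 = 7 * n^2 - 53 * n + 2"
    by (simp add: power2_eq_square power3_eq_cube algebra_simps)
  moreover have "7 * n^2 - 53 * n + 2 > 0"
  proof -
    have "n * 8 \<le> n * n" using assms(1) by (intro mult_left_mono) auto
    then have "0 < 7 * (n * n) - 53 * n + 2" using assms(1) by linarith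
    then show ?thesis by (simp add: power2_eq_square)
  qed
  ultimately show ?thesis by linarith
qed

theorem mainTheorem8:
  fixes \<epsilon> :: real and n k :: nat
  assumes "0 < \<epsilon>" and "\<epsilon> < 1"
    and "real n \<ge> 2 / \<epsilon>"
    and "2 \<le> k" and "real k \<le> \<epsilon> * real n"
  shows "\<exists>R. pv_graph n k R \<and> feasible n R \<and> irredundant R \<and> heterogeneous R \<and>
           real (min_moves n R) > 1/4 * (1 - \<epsilon>)^2 * (real n)^2 * (real k - 2)"
proof -
  have "2 < 2 / \<epsilon>" using assms(1,2) by (simp add: field_simps)
  then have "2 < real n" using assms(3) by linarith
  then have n3: "3 \<le> n" by linarith
  have "\<epsilon> * real n < real n" using assms(2) n3 by simp
  then have kn: "k < n" using assms(5) by linarith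
  define T where "T = (real n - real k)^2 * (real k - 2) / 4"
  have Tg: "1/4 * (1 - \<epsilon>)^2 * (real n)^2 * (real k - 2) \<le> T"
  proof -
    have a: "0 \<le> (1 - \<epsilon>) * real n" using assms(2) by simp
    have b: "(1 - \<epsilon>) * real n \<le> real n - real k" using assms(5) by (simp add: algebra_simps)
    have "((1 - \<epsilon>) * real n)^2 \<le> (real n - real k)^2" by (rule power_mono[OF b a])
    then have "((1 - \<epsilon>) * real n)^2 * (real k - 2) \<le> (real n - real k)^2 * (real k - 2)"
      using assms(4) by (intro mult_right_mono) auto
    then show ?thesis unfolding T_def by (simp add: power_mult_distrib)
  qed
  have Tb: "T \<le> (real n - 2)^3 / 27" unfolding T_def by (rule Tn_le) (use assms(4) kn in auto)
  have suff: "\<exists>R. pv_graph n k R \<and> feasible n R \<and> irredundant R \<and> heterogeneous R \<and>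
           real (min_moves n R) > T"
  proof (cases "n \<le> 7 \<or> T < real n - 1")
    case True
    have Tl: "T < real n - 1"
    proof (cases "n \<le> 7")
      case True
      then have "(real n - 2)^3 / 27 < real n - 1" using n3 by (intro small_n) auto
      then show ?thesis using Tb by linarith
    next
      case False then show ?thesis using \<open>n \<le> 7 \<or> T < real n - 1\<close> by simp
    qed
    have R: "pv_graph n k (R0 n k) \<and> feasible n (R0 n k) \<and> irredundant (R0 n k)
      \<and> heterogeneous (R0 n k) \<and> n - 1 \<le> min_moves n (R0 n k)"
      by (rule R0_facts) (use n3 assms(4) in auto)
    then have "real (n - 1) \<le> real (min_moves n (R0 n k))" by simp
    then have "real n - 1 \<le> real (min_moves n (R0 n k))" using n3 by simp
    then show ?thesis using R Tl by (intro exI[of _ "R0 n k"]) auto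
  next
    case False
    then have n8: "8 \<le> n" and TL: "real n - 1 \<le> T" by auto
    have k3: "3 \<le> k"
    proof (rule ccontr)
      assume "\<not> 3 \<le> k" then have "k = 2" using assms(4) by simp
      then have "T = 0" unfolding T_def by simp
      then show False using TL n8 by simp
    qed
    define M where "M = (n + 2) div 3"
    define m0 where "m0 = min k M"
    define m where "m = (if even (n - m0) then m0 else m0 - 1)"
    define p where "p = (n - m + 2) div 2"
    have M3: "3 \<le> M" unfolding M_def using n8 by simp
    have M1: "3 * M \<le> n + 2" unfolding M_def by simp
    have M2: "n \<le> 3 * M" unfolding M_def by linarith
    have m0k: "m0 \<le> k" "m0 \<le> M" "3 \<le> m0" unfolding m0_def using M3 k3 by auto
    have mm0: "m \<le> m0" "m0 \<le> m + 1" "even (n - m)" "2 \<le> m"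
      unfolding m_def using m0k by (auto simp: even_diff_nat)
    have mn: "m \<le> n" using mm0 m0k M1 n8 by linarith
    have p2: "2 * p = n - m + 2" unfolding p_def using mm0(3) mn by (auto elim!: evenE)
    have mp: "m \<le> p" using p2 mm0 m0k M1 by linarith
    have mk: "m \<le> k" using mm0 m0k by linarith
    interpret C: chain p m k by unfold_locales (use mm0 mp mk in auto)
    have nnn: "C.nn = n" unfolding C.nn_def using p2 mn mm0 by linarith
    have props: "pv_graph n k C.RR \<and> irredundant C.RR \<and> heterogeneous C.RR"
      using C.RR_props unfolding nnn .
    have feas: "feasible n C.RR" using C.RR_feasible unfolding nnn .
    have low: "(m - 1) * (C.LL - 1) + 1 \<le> min_moves n C.RR" using C.RR_lower unfolding nnn .
    have pge: "1 \<le> p * Suc p" using mp mm0 by simp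
    have cost: "real ((m - 1) * (C.LL - 1) + 1) = (real m - 1) * (real p * (real p + 1) - 1) + 1"
    proof -
      have e1: "real (C.LL - 1) = real p * (real p + 1) - 1"
        using pge unfolding C.LL_def by (simp add: of_nat_diff algebra_simps)
      have e2: "real (m - 1) = real m - 1" using mm0 by simp
      have "real ((m - 1) * (C.LL - 1) + 1) = real (m - 1) * real (C.LL - 1) + 1" by simp
      then show ?thesis unfolding e1 e2 .
    qed
    have big: "T < (real m - 1) * (real p * (real p + 1) - 1) + 1"
    proof (cases "k \<le> M")
      case True
      then have "m0 = k" unfolding m0_def by simp
      then have mk1: "k \<le> m + 1" using mm0 by simp
      have "(real k - 2) * (real n - real k)^2 / 4 < (real m - 1) * (real p * (real p + 1) - 1) + 1"
      proof (rule big_case1)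
        show "1 \<le> real k - 2" using k3 by simp
        show "real k - 2 \<le> real m - 1" using mk1 by simp
        show "0 \<le> real n - real k" using kn by simp
        have "real (2 * p) = real n - real m + 2" using p2 mn by simp
        then show "real n - real k + 2 \<le> 2 * real p" using mk by simp
      qed
      then show ?thesis unfolding T_def by (simp add: algebra_simps)
    next
      case False
      then have "m0 = M" unfolding m0_def by simp
      then have mM: "M \<le> m + 1" using mm0 by simp
      have "(real n - 2)^3 / 27 < (real m - 1) * (real p * (real p + 1) - 1) + 1"
      proof (rule big_case2)
        show "8 \<le> real n" using n8 by simp
        have "real n \<le> 3 * real M" using M2 by linarith
        moreover have "real M \<le> real m + 1" using mM by linarith
        ultimately show "real n / 3 - 2 \<le> real m - 1" by simp
        have "real (2 * p) = real n - real m + 2" using p2 mn by simp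
        moreover have "3 * real m \<le> real n + 2" using mm0 m0k M1 by linarith
        ultimately show "(real n + 2) / 3 \<le> real p" by simp
      qed
      then show ?thesis using Tb by linarith
    qed
    have "T < real (min_moves n C.RR)" using big low cost
      by (metis of_nat_le_iff order_less_le_trans)
    then show ?thesis using props feas by blast
  qed
  then show ?thesis using Tg by (meson order_le_less_trans)
qed

end
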